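(* Assume A1, A2, A3(D), $\beta\in[0,1)$ and $0<\eta<2N/(\sigma_{\max}^2H_{s_0})$, where $s_0=\ell^{-1}(N\mathcal{L}(w(1)))$. Let $C_1=\frac{\sigma_{\max}^2H_{s_0}}{2N}\eta\in(0,1)$. Let $w(t)$ be the GDM iterates, with the convention $w(0)=w(1)$, and define $$\xi(t)=\mathcal{L}(w(t))+\frac{\beta}{2\eta(1-\beta)}\|w(t)-w(t-1)\|^2.$$ Then for every $t\ge1$ and every $\alpha\in[0,1]$, writing $w(t+\alpha)=w(t)+\alpha(w(t+1)-w(t))$, $$\xi(t)\ge\mathcal{L}(w(t+\alpha))+\frac{\beta\alpha^2}{2\eta(1-\beta)}\|w(t+1)-w(t)\|^2+\frac{(1-C_1)\alpha^2}{\eta}\|w(t+1)-w(t)\|^2.$$ In particular, $\xi(t)\ge\xi(t+1)+\frac{1-C_1}{\eta}\|w(t+1)-w(t)\|^2$ for all $t\ge1$.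
   Context: Setting. The data are $S=\{x_1,\dots,x_N\}\subset\mathbb{R}^d$, with labels absorbed. The empirical loss is $\mathcal{L}(w)=\frac1N\sum_i\ell(\langle w,x_i\rangle)$. $\sigma_{\max}$ is the spectral norm of $(x_1,\dots,x_N)$. A1: there is $w$ with $\langle w,x_i\rangle>0$ for all $i$. A2: $\ell$ is differentiable, $\ell'<0$, $\ell(x),\ell'(x)\to0$ as $x\to\infty$, and $\limsup_{x\to-\infty}\ell'(x)<0$. There are positive $\mu_\pm,x_\pm$ with $-\ell'(x)\le(1+e^{-\mu_+x})e^{-x}$ for $x>x_+$ and $-\ell'(x)\ge(1-e^{-\mu_-x})e^{-x}$ for $x>x_-$. $\ell^{-1}$ is the inverse of the bijection $\ell:\mathbb{R}\to(0,\infty)$. A3(D): $H_{s_0}$ is the smallest constant with $|\ell'(x)-\ell'(y)|\le H_{s_0}|x-y|$ for $x,y\ge s_0$ (finite for every $s_0$). GDM: $m(0)=0$, $m(t)=\beta m(t-1)+(1-\beta)\nabla\mathcal{L}(w(t))$, $w(t+1)=w(t)-\eta m(t)$ for $t\ge1$. *)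

theory Defs
  imports "HOL-Analysis.Analysis"
begin

definition emp_loss :: "(real \<Rightarrow> real) \<Rightarrow> (nat \<Rightarrow> 'a::euclidean_space) \<Rightarrow> nat \<Rightarrow> 'a \<Rightarrow> real" where
  "emp_loss l x N w = (1 / real N) * (\<Sum>i<N. l (inner w (x i)))"

definition gradient :: "('a::real_inner \<Rightarrow> real) \<Rightarrow> 'a \<Rightarrow> 'a" where
  "gradient f v = (THE D. GDERIV f v :> D)"

text \<open>Spectral norm (operator 2-norm) of the d x N matrix with columns x_0, ..., x_{N-1}.\<close>
definition sigma_max :: "(nat \<Rightarrow> 'a::euclidean_space) \<Rightarrow> nat \<Rightarrow> real" where
  "sigma_max x N = Sup {norm (\<Sum>i<N. v i *\<^sub>R x i) | v. (\<Sum>i<N. (v i)\<^sup>2) = 1}"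

definition lip_const :: "(real \<Rightarrow> real) \<Rightarrow> real \<Rightarrow> real" where
  "lip_const l s0 = Inf {H. \<forall>a b. a \<ge> s0 \<longrightarrow> b \<ge> s0 \<longrightarrow> \<bar>deriv l a - deriv l b\<bar> \<le> H * \<bar>a - b\<bar>}"

end

theory Submission
  imports Defs
begin


lemma scalar_descent:
  fixes f :: "real \<Rightarrow> real"
  assumes dif: "\<forall>s. f differentiable (at s)"
    and lip: "\<forall>a b. a \<ge> s0 \<longrightarrow> b \<ge> s0 \<longrightarrow> \<bar>deriv f a - deriv f b\<bar> \<le> H * \<bar>a - b\<bar>"
    and a: "a \<ge> s0" and y: "y \<ge> s0"
  shows "f y \<le> f a + deriv f a * (y - a) + H / 2 * (y - a)^2"
proof -
  define g where "g z = f z - f a - deriv f a * (z - a) - H / 2 * (z - a)^2" for z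
  have dg: "DERIV g z :> deriv f z - deriv f a - H * (z - a)" for z
  proof -
    have "DERIV f z :> deriv f z" using dif DERIV_deriv_iff_real_differentiable by blast
    then show ?thesis unfolding g_def
      by (auto intro!: derivative_eq_intros simp: algebra_simps power2_eq_square)
  qed
  have "g y \<le> 0"
  proof (cases y a rule: linorder_cases)
    case less
    obtain c where c: "y < c" "c < a" "g a - g y = (a - y) * (deriv f c - deriv f a - H * (c - a))"
      using MVT2[OF less, of g "\<lambda>z. deriv f z - deriv f a - H * (z - a)"] dg by blast
    have "\<bar>deriv f c - deriv f a\<bar> \<le> H * \<bar>c - a\<bar>" using lip[rule_format, of c a] c y a by auto
    then have "deriv f c - deriv f a - H * (c - a) \<ge> 0" using c by (auto simp: abs_le_iff algebra_simps)
    then have "g a - g y \<ge> 0" using c by simp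
    moreover have "g a = 0" by (simp add: g_def)
    ultimately show ?thesis by simp
  next
    case equal then show ?thesis by (simp add: g_def)
  next
    case greater
    obtain c where c: "a < c" "c < y" "g y - g a = (y - a) * (deriv f c - deriv f a - H * (c - a))"
      using MVT2[OF greater, of g "\<lambda>z. deriv f z - deriv f a - H * (z - a)"] dg by blast
    have "\<bar>deriv f c - deriv f a\<bar> \<le> H * \<bar>c - a\<bar>" using lip[rule_format, of c a] c y a by auto
    then have "deriv f c - deriv f a - H * (c - a) \<le> 0" using c by auto
    then have "g y - g a \<le> 0" using c by (simp add: mult_nonneg_nonpos)
    moreover have "g a = 0" by (simp add: g_def)
    ultimately show ?thesis by simp
  qed
  then show ?thesis by (simp add: g_def)
qed

lemma sigma_bound:
  fixes x :: "nat \<Rightarrow> 'a::euclidean_space"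
  shows "(\<Sum>i<N. (inner d (x i))^2) \<le> (sigma_max x N)^2 * (norm d)^2"
proof -
  define r where "r = sqrt (\<Sum>i<N. (inner d (x i))^2)"
  have r0: "r \<ge> 0" by (simp add: r_def sum_nonneg)
  have rr: "r^2 = (\<Sum>i<N. (inner d (x i))^2)" by (simp add: r_def sum_nonneg)
  show ?thesis
  proof (cases "r = 0")
    case True then show ?thesis using rr by simp
  next
    case False
    then have rp: "r > 0" using r0 by simp
    define v where "v i = inner d (x i) / r" for i
    have sne: "(\<Sum>i<N. (inner d (x i))^2) \<noteq> 0" using rr rp by (metis power_not_zero less_irrefl)
    have v1: "(\<Sum>i<N. (v i)^2) = 1"
      using sne rr rp by (simp add: v_def power_divide sum_divide_distrib[symmetric])
    have bdd: "bdd_above {norm (\<Sum>i<N. v i *\<^sub>R x i) | v. (\<Sum>i<N. (v i)\<^sup>2) = 1}"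
    proof (rule bdd_aboveI)
      fix z assume "z \<in> {norm (\<Sum>i<N. v i *\<^sub>R x i) | v. (\<Sum>i<N. (v i)\<^sup>2) = 1}"
      then obtain u where u: "z = norm (\<Sum>i<N. u i *\<^sub>R x i)" "(\<Sum>i<N. (u i)\<^sup>2) = 1" by blast
      have "\<bar>u i\<bar> \<le> 1" if "i < N" for i
      proof -
        have "(u i)^2 \<le> (\<Sum>i<N. (u i)\<^sup>2)"
          by (rule member_le_sum) (use that in auto)
        then have "(u i)^2 \<le> 1^2" using u by simp
        then show ?thesis using abs_le_square_iff[of "u i" 1] by simp
      qed
      then have "norm (u i *\<^sub>R x i) \<le> norm (x i)" if "i < N" for i
        using that by (simp add: mult_left_le_one_le)
      then have "(\<Sum>i<N. norm (u i *\<^sub>R x i)) \<le> (\<Sum>i<N. norm (x i))"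
        by (intro sum_mono) auto
      then show "z \<le> (\<Sum>i<N. norm (x i))" using u norm_sum[of "\<lambda>i. u i *\<^sub>R x i" "{..<N}"] by linarith
    qed
    have le: "norm (\<Sum>i<N. v i *\<^sub>R x i) \<le> sigma_max x N"
      unfolding sigma_max_def by (rule cSup_upper[OF _ bdd]) (use v1 in blast)
    have "inner d (\<Sum>i<N. v i *\<^sub>R x i) = (\<Sum>i<N. (inner d (x i))^2) / r"
      by (simp add: inner_sum_right v_def power2_eq_square sum_divide_distrib)
    also have "\<dots> = r" using rr rp by (metis nonzero_mult_div_cancel_left power2_eq_square less_irrefl)
    finally have "r \<le> norm d * norm (\<Sum>i<N. v i *\<^sub>R x i)"
      by (metis Cauchy_Schwarz_ineq2 abs_le_D1)
    also have "\<dots> \<le> norm d * sigma_max x N" by (rule mult_left_mono[OF le]) simp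
    finally have "r^2 \<le> (norm d * sigma_max x N)^2" using r0 by (simp add: power_mono)
    then show ?thesis using rr by (simp add: power_mult_distrib mult.commute)
  qed
qed

lemma lip_const_prop:
  assumes "\<exists>H. \<forall>a b. a \<ge> s0 \<longrightarrow> b \<ge> s0 \<longrightarrow> \<bar>deriv l a - deriv l b\<bar> \<le> H * \<bar>a - b\<bar>"
  shows "lip_const l s0 \<ge> 0"
    and "\<forall>a b. a \<ge> s0 \<longrightarrow> b \<ge> s0 \<longrightarrow> \<bar>deriv l a - deriv l b\<bar> \<le> lip_const l s0 * \<bar>a - b\<bar>"
proof -
  let ?S = "{H. \<forall>a b. a \<ge> s0 \<longrightarrow> b \<ge> s0 \<longrightarrow> \<bar>deriv l a - deriv l b\<bar> \<le> H * \<bar>a - b\<bar>}"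
  have ne: "?S \<noteq> {}" using assms by blast
  have lb: "H \<ge> 0" if "H \<in> ?S" for H
  proof -
    have h: "\<forall>a b. a \<ge> s0 \<longrightarrow> b \<ge> s0 \<longrightarrow> \<bar>deriv l a - deriv l b\<bar> \<le> H * \<bar>a - b\<bar>"
      using that by simp
    from h[rule_format, of "s0+1" s0] show ?thesis by simp
  qed
  show "lip_const l s0 \<ge> 0" unfolding lip_const_def
    by (rule cInf_greatest[OF ne]) (use lb in blast)
  show "\<forall>a b. a \<ge> s0 \<longrightarrow> b \<ge> s0 \<longrightarrow> \<bar>deriv l a - deriv l b\<bar> \<le> lip_const l s0 * \<bar>a - b\<bar>"
  proof (intro allI impI)
    fix a b :: real assume ab: "a \<ge> s0" "b \<ge> s0"
    show "\<bar>deriv l a - deriv l b\<bar> \<le> lip_const l s0 * \<bar>a - b\<bar>"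
    proof (cases "a = b")
      case True then show ?thesis by simp
    next
      case False
      then have p: "\<bar>a - b\<bar> > 0" by simp
      have "\<bar>deriv l a - deriv l b\<bar> / \<bar>a - b\<bar> \<le> lip_const l s0" unfolding lip_const_def
      proof (rule cInf_greatest[OF ne])
        fix H assume "H \<in> ?S"
        then have "\<bar>deriv l a - deriv l b\<bar> \<le> H * \<bar>a - b\<bar>" using ab by auto
        then show "\<bar>deriv l a - deriv l b\<bar> / \<bar>a - b\<bar> \<le> H" using p by (simp add: divide_le_eq)
      qed
      then show ?thesis using p by (simp add: divide_le_eq)
    qed
  qed
qed

lemma grad_formula:
  fixes x :: "nat \<Rightarrow> 'a::euclidean_space"
  assumes dif: "\<forall>s. l differentiable (at s)"
  shows "gradient (emp_loss l x N) w = (1/real N) *\<^sub>R (\<Sum>i<N. deriv l (inner w (x i)) *\<^sub>R x i)"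
proof -
  define D where "D = (1/real N) *\<^sub>R (\<Sum>i<N. deriv l (inner w (x i)) *\<^sub>R x i)"
  have di: "((\<lambda>w. l (inner w (x i))) has_derivative (\<lambda>h. inner h (deriv l (inner w (x i)) *\<^sub>R x i))) (at w)" for i
  proof -
    have g: "GDERIV (\<lambda>w. inner w (x i)) w :> x i"
      unfolding gderiv_def by (auto intro!: derivative_eq_intros)
    have "DERIV l (inner w (x i)) :> deriv l (inner w (x i))"
      using dif DERIV_deriv_iff_real_differentiable by blast
    from GDERIV_DERIV_compose[OF g this] show ?thesis unfolding gderiv_def .
  qed
  have "((\<lambda>w. (1/real N) * (\<Sum>i<N. l (inner w (x i)))) has_derivative
      (\<lambda>h. (1/real N) * (\<Sum>i<N. inner h (deriv l (inner w (x i)) *\<^sub>R x i)))) (at w)"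
    by (intro has_derivative_mult_right has_derivative_sum di)
  moreover have "(\<lambda>h. (1/real N) * (\<Sum>i<N. inner h (deriv l (inner w (x i)) *\<^sub>R x i))) = (\<lambda>h. inner h D)"
    by (auto simp: D_def inner_sum_right)
  ultimately have gd: "GDERIV (emp_loss l x N) w :> D"
    unfolding gderiv_def emp_loss_def[abs_def] by simp
  have "gradient (emp_loss l x N) w = D"
    unfolding gradient_def
  proof (rule the_equality)
    show "GDERIV (emp_loss l x N) w :> D" by (rule gd)
  next
    fix D' assume "GDERIV (emp_loss l x N) w :> D'"
    with gd have "(\<lambda>h. inner h D') = (\<lambda>h. inner h D)" unfolding gderiv_def
      using has_derivative_unique by blast
    then have "inner (D' - D) D' = inner (D' - D) D" by metis
    then have "inner (D' - D) (D' - D) = 0" by (simp add: inner_diff_right)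
    then show "D' = D" by simp
  qed
  then show ?thesis by (simp add: D_def)
qed


lemma loss_descent:
  fixes x :: "nat \<Rightarrow> 'a::euclidean_space"
  assumes dif: "\<forall>s. l differentiable (at s)"
    and lip: "\<forall>a b. a \<ge> s0 \<longrightarrow> b \<ge> s0 \<longrightarrow> \<bar>deriv l a - deriv l b\<bar> \<le> H * \<bar>a - b\<bar>"
    and H0: "H \<ge> 0" and N: "N > 0"
    and p: "\<forall>i<N. inner p (x i) \<ge> s0" and q: "\<forall>i<N. inner q (x i) \<ge> s0"
  shows "emp_loss l x N q \<le> emp_loss l x N p + inner (gradient (emp_loss l x N) p) (q - p)
           + (sigma_max x N)^2 * H / (2 * real N) * (norm (q - p))^2"
proof -
  have each: "l (inner q (x i)) \<le> l (inner p (x i)) + deriv l (inner p (x i)) * inner (q - p) (x i)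
      + H/2 * (inner (q - p) (x i))^2" if "i < N" for i
    using scalar_descent[OF dif lip, of "inner p (x i)" "inner q (x i)"] p q that
    by (simp add: inner_diff_left)
  have "(\<Sum>i<N. l (inner q (x i))) \<le> (\<Sum>i<N. l (inner p (x i)) + deriv l (inner p (x i)) * inner (q - p) (x i)
      + H/2 * (inner (q - p) (x i))^2)"
    by (rule sum_mono) (use each in auto)
  also have "\<dots> = (\<Sum>i<N. l (inner p (x i))) + (\<Sum>i<N. deriv l (inner p (x i)) * inner (q - p) (x i))
      + H/2 * (\<Sum>i<N. (inner (q - p) (x i))^2)"
    by (simp add: sum.distrib sum_distrib_left)
  also have "\<dots> \<le> (\<Sum>i<N. l (inner p (x i))) + (\<Sum>i<N. deriv l (inner p (x i)) * inner (q - p) (x i))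
      + H/2 * ((sigma_max x N)^2 * (norm (q - p))^2)"
    using mult_left_mono[OF sigma_bound[where d="q - p" and N=N and x=x], of "H/2"] H0 by simp
  finally have main: "(\<Sum>i<N. l (inner q (x i))) \<le> (\<Sum>i<N. l (inner p (x i))) + (\<Sum>i<N. deriv l (inner p (x i)) * inner (q - p) (x i))
      + H/2 * ((sigma_max x N)^2 * (norm (q - p))^2)" .
  have gr: "inner (gradient (emp_loss l x N) p) (q - p) = (1 / real N) * (\<Sum>i<N. deriv l (inner p (x i)) * inner (q - p) (x i))"
    unfolding grad_formula[OF dif] inner_scaleR_left inner_sum_left
    by (simp add: inner_commute)
  have "emp_loss l x N q = (1 / real N) * (\<Sum>i<N. l (inner q (x i)))" by (simp add: emp_loss_def)
  also have "\<dots> \<le> (1 / real N) * ((\<Sum>i<N. l (inner p (x i))) + (\<Sum>i<N. deriv l (inner p (x i)) * inner (q - p) (x i))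
      + H/2 * ((sigma_max x N)^2 * (norm (q - p))^2))"
    by (rule mult_left_mono[OF main]) simp
  also have "\<dots> = emp_loss l x N p + inner (gradient (emp_loss l x N) p) (q - p)
           + (sigma_max x N)^2 * H / (2 * real N) * (norm (q - p))^2"
    unfolding gr emp_loss_def by (simp add: algebra_simps)
  finally show ?thesis .
qed

lemma arith_core:
  fixes \<kappa> \<eta> \<beta> \<alpha> P Q D E C1 L0 Lp :: real
  assumes k: "\<kappa> = \<eta> * (1 - \<beta>)" and eta: "\<eta> > 0" and b: "0 \<le> \<beta>" "\<beta> < 1"
    and a: "0 \<le> \<alpha>" "\<alpha> \<le> 1"
    and kP: "\<kappa> * P = \<beta> * Q - D"
    and sq: "\<beta> * (E - 2 * \<alpha> * Q + \<alpha>^2 * D) \<ge> 0"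
    and D: "D \<ge> 0"
    and desc: "Lp \<le> L0 + \<alpha> * P + C1 / \<eta> * \<alpha>^2 * D"
  shows "L0 + \<beta> / (2 * \<eta> * (1 - \<beta>)) * E \<ge> Lp + \<beta> * \<alpha>^2 / (2 * \<eta> * (1 - \<beta>)) * D + (1 - C1) * \<alpha>^2 / \<eta> * D"
proof -
  have kp: "\<kappa> > 0" using k eta b by simp
  have YZ: "\<alpha>^2 * D \<le> \<alpha> * D"
    using a D by (simp add: power2_eq_square mult_left_le_one_le mult_right_mono)
  have e1: "C1 / \<eta> * \<alpha>^2 * D + (1 - C1) * \<alpha>^2 / \<eta> * D = \<alpha>^2 * D / \<eta>"
    using eta by (simp add: field_simps)
  have key: "2 * \<kappa> * (\<alpha> * P + \<alpha>^2 * D / \<eta> + \<beta> * \<alpha>^2 * D / (2 * \<kappa>)) \<le> \<beta> * E"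
  proof -
    have "2 * \<kappa> * (\<alpha> * P + \<alpha>^2 * D / \<eta> + \<beta> * \<alpha>^2 * D / (2 * \<kappa>))
        = 2 * \<alpha> * (\<kappa> * P) + 2 * (1 - \<beta>) * (\<alpha>^2 * D) + \<beta> * (\<alpha>^2 * D)"
      unfolding k using eta b by (simp add: field_simps power2_eq_square)
    also have "\<dots> = 2 * (\<beta> * (\<alpha> * Q)) - 2 * (\<alpha> * D) + 2 * (1 - \<beta>) * (\<alpha>^2 * D) + \<beta> * (\<alpha>^2 * D)"
      unfolding kP by (simp add: algebra_simps)
    finally have eq: "2 * \<kappa> * (\<alpha> * P + \<alpha>^2 * D / \<eta> + \<beta> * \<alpha>^2 * D / (2 * \<kappa>))
        = 2 * (\<beta> * (\<alpha> * Q)) - 2 * (\<alpha> * D) + 2 * (1 - \<beta>) * (\<alpha>^2 * D) + \<beta> * (\<alpha>^2 * D)" .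
    have sq': "\<beta> * E - 2 * (\<beta> * (\<alpha> * Q)) + \<beta> * (\<alpha>^2 * D) \<ge> 0" using sq by (simp add: algebra_simps)
    have "2 * (1 - \<beta>) * (\<alpha>^2 * D) + 2 * \<beta> * (\<alpha>^2 * D) \<le> 2 * (\<alpha> * D)" using YZ by (simp add: algebra_simps)
    then show ?thesis unfolding eq using sq' by (simp add: algebra_simps)
  qed
  have "\<alpha> * P + \<alpha>^2 * D / \<eta> + \<beta> * \<alpha>^2 * D / (2 * \<kappa>) \<le> \<beta> * E / (2 * \<kappa>)"
    using key kp by (simp add: field_simps)
  moreover have "\<beta> * \<alpha>^2 / (2 * \<eta> * (1 - \<beta>)) * D = \<beta> * \<alpha>^2 * D / (2*\<kappa>)"
    using k by simp
  moreover have "\<beta> / (2 * \<eta> * (1 - \<beta>)) * E = \<beta> * E / (2*\<kappa>)"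
    using k by simp
  ultimately show ?thesis using desc e1 by linarith
qed


theorem lemma1:
  fixes x :: "nat \<Rightarrow> 'a::euclidean_space"
    and N :: nat
    and l :: "real \<Rightarrow> real"
    and \<beta> \<eta> :: real
    and w m :: "nat \<Rightarrow> 'a"
  assumes N_pos: "N > 0"
    \<comment> \<open>A1: linear separability\<close>
    and A1: "\<exists>u. \<forall>i<N. inner u (x i) > 0"
    \<comment> \<open>A2\<close>
    and A2_diff: "\<forall>s. l differentiable (at s)"
    and A2_neg: "\<forall>s. deriv l s < 0"
    and A2_lim: "(l \<longlongrightarrow> 0) at_top"
    and A2_dlim: "(deriv l \<longlongrightarrow> 0) at_top"
    and A2_limsup: "Limsup at_bot (\<lambda>s. ereal (deriv l s)) < 0"
    and A2_upper: "\<exists>\<mu>p xp. \<mu>p > 0 \<and> xp > 0 \<and>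
        (\<forall>s>xp. - deriv l s \<le> (1 + exp (- \<mu>p * s)) * exp (- s))"
    and A2_lower: "\<exists>\<mu>m xm. \<mu>m > 0 \<and> xm > 0 \<and>
        (\<forall>s>xm. - deriv l s \<ge> (1 - exp (- \<mu>m * s)) * exp (- s))"
    and A2_bij: "bij_betw l UNIV {0<..}"
    \<comment> \<open>A3(D): l' is Lipschitz on every half-line [s0, infinity)\<close>
    and A3: "\<forall>s0. \<exists>H. \<forall>a b. a \<ge> s0 \<longrightarrow> b \<ge> s0 \<longrightarrow> \<bar>deriv l a - deriv l b\<bar> \<le> H * \<bar>a - b\<bar>"
    \<comment> \<open>step sizes\<close>
    and beta: "0 \<le> \<beta>" "\<beta> < 1"
    and eta_pos: "0 < \<eta>"
    and eta_small: "\<eta> < 2 * real N /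
        ((sigma_max x N)\<^sup>2 * lip_const l (inv l (real N * emp_loss l x N (w 1))))"
    \<comment> \<open>GDM iterates, with the convention w(0) = w(1)\<close>
    and m0: "m 0 = 0"
    and m_step: "\<forall>t\<ge>1. m t = \<beta> *\<^sub>R m (t - 1) + (1 - \<beta>) *\<^sub>R gradient (emp_loss l x N) (w t)"
    and w_step: "\<forall>t\<ge>1. w (t + 1) = w t - \<eta> *\<^sub>R m t"
    and w0: "w 0 = w 1"
  shows "let s0 = inv l (real N * emp_loss l x N (w 1));
             C1 = (sigma_max x N)\<^sup>2 * lip_const l s0 / (2 * real N) * \<eta>;
             \<xi> = (\<lambda>t. emp_loss l x N (w t) + \<beta> / (2 * \<eta> * (1 - \<beta>)) * (norm (w t - w (t - 1)))\<^sup>2)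
         in (\<forall>t\<ge>1. \<forall>\<alpha>\<in>{0..1}.
               \<xi> t \<ge> emp_loss l x N (w t + \<alpha> *\<^sub>R (w (t + 1) - w t))
                     + \<beta> * \<alpha>\<^sup>2 / (2 * \<eta> * (1 - \<beta>)) * (norm (w (t + 1) - w t))\<^sup>2
                     + (1 - C1) * \<alpha>\<^sup>2 / \<eta> * (norm (w (t + 1) - w t))\<^sup>2)
          \<and> (\<forall>t\<ge>1. \<xi> t \<ge> \<xi> (t + 1) + (1 - C1) / \<eta> * (norm (w (t + 1) - w t))\<^sup>2)"
  proof -
  define L where "L = emp_loss l x N"
  define s0 where "s0 = inv l (real N * emp_loss l x N (w 1))"
  define H where "H = lip_const l s0"
  define \<sigma> where "\<sigma> = sigma_max x N"
  define C1 where "C1 = \<sigma>\<^sup>2 * H / (2 * real N) * \<eta>"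
  define \<xi> where "\<xi> = (\<lambda>t. emp_loss l x N (w t) + \<beta> / (2 * \<eta> * (1 - \<beta>)) * (norm (w t - w (t - 1)))\<^sup>2)"
  have lpos: "l s > 0" for s using A2_bij unfolding bij_betw_def by auto
  have ldec: "l b < l a" if "a < b" for a b
    by (rule DERIV_neg_imp_decreasing[OF that]) (use A2_diff A2_neg DERIV_deriv_iff_real_differentiable in blast)
  have NL: "real N * L v = (\<Sum>i<N. l (inner v (x i)))" for v
    using N_pos by (simp add: L_def emp_loss_def)
  have ls0: "l s0 = real N * L (w 1)"
  proof -
    have "(\<Sum>i<N. l (inner (w 1) (x i))) > 0"
      using N_pos lpos by (intro sum_pos) auto
    then have "real N * L (w 1) \<in> l ` UNIV" using A2_bij NL unfolding bij_betw_def by auto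
    then show ?thesis unfolding s0_def L_def by (rule f_inv_into_f)
  qed
  have inS: "\<forall>i<N. s0 \<le> inner v (x i)" if "L v \<le> L (w 1)" for v
  proof (intro allI impI)
    fix i assume i: "i < N"
    have "l (inner v (x i)) \<le> (\<Sum>j<N. l (inner v (x j)))"
      by (rule member_le_sum) (use i lpos less_imp_le in auto)
    also have "\<dots> \<le> real N * L (w 1)"
      using mult_left_mono[OF that, of "real N"] NL[of v] by simp
    finally have "l (inner v (x i)) \<le> l s0" using ls0 by simp
    then show "s0 \<le> inner v (x i)" using ldec[of "inner v (x i)" s0] by force
  qed
  have ex: "\<exists>H. \<forall>a b. a \<ge> s0 \<longrightarrow> b \<ge> s0 \<longrightarrow> \<bar>deriv l a - deriv l b\<bar> \<le> H * \<bar>a - b\<bar>"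
    using A3 by blast
  note Hprops = lip_const_prop[OF ex]
  have H0: "H \<ge> 0" using Hprops(1) by (simp add: H_def)
  have Hlip: "\<forall>a b. a \<ge> s0 \<longrightarrow> b \<ge> s0 \<longrightarrow> \<bar>deriv l a - deriv l b\<bar> \<le> H * \<bar>a - b\<bar>"
    using Hprops(2) by (simp add: H_def)
  have eta': "\<eta> < 2 * real N / (\<sigma>\<^sup>2 * H)" using eta_small by (simp add: \<sigma>_def H_def s0_def)
  have pos: "\<sigma>\<^sup>2 * H > 0"
  proof -
    have "\<sigma>\<^sup>2 * H \<ge> 0" using H0 by simp
    moreover have "\<sigma>\<^sup>2 * H \<noteq> 0" using eta' eta_pos by auto
    ultimately show ?thesis by linarith
  qed
  have C1lt: "C1 < 1"
  proof -
    have "\<eta> * (\<sigma>\<^sup>2 * H) < 2 * real N" using eta' pos by (simp add: less_divide_eq)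
    then show ?thesis using N_pos unfolding C1_def by (simp add: field_simps)
  qed
  have C1ge: "C1 \<ge> 0" unfolding C1_def using pos eta_pos by simp
  have mprev: "\<eta> *\<^sub>R m (t - 1) = w (t - 1) - w t" if t: "t \<ge> 1" for t
  proof (cases "t = 1")
    case True then show ?thesis using m0 w0 by simp
  next
    case False
    then have "t - 1 \<ge> 1" using t by simp
    then have "w (t - 1 + 1) = w (t - 1) - \<eta> *\<^sub>R m (t - 1)" using w_step by blast
    moreover have "t - 1 + 1 = t" using t by simp
    ultimately show ?thesis by (simp add: algebra_simps)
  qed
  have rel: "w (t+1) - w t = \<beta> *\<^sub>R (w t - w (t-1)) - (\<eta> * (1 - \<beta>)) *\<^sub>R gradient L (w t)"
    if t: "t \<ge> 1" for t
  proof -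
    have "w (t+1) - w t = - (\<eta> *\<^sub>R m t)" using w_step t by simp
    also have "\<dots> = - (\<beta> *\<^sub>R (\<eta> *\<^sub>R m (t-1))) - (\<eta> * (1 - \<beta>)) *\<^sub>R gradient L (w t)"
      using m_step t by (simp add: L_def scaleR_add_right)
    also have "\<dots> = \<beta> *\<^sub>R (w t - w (t-1)) - (\<eta> * (1 - \<beta>)) *\<^sub>R gradient L (w t)"
    proof -
      have "- (\<beta> *\<^sub>R (\<eta> *\<^sub>R m (t-1))) = \<beta> *\<^sub>R (w t - w (t-1))"
        unfolding mprev[OF t] by (simp add: scaleR_diff_right)
      then show ?thesis by simp
    qed
    finally show ?thesis .
  qed
  have Ib: "\<xi> t \<ge> L (w t + \<alpha> *\<^sub>R (w (t + 1) - w t))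
                     + \<beta> * \<alpha>\<^sup>2 / (2 * \<eta> * (1 - \<beta>)) * (norm (w (t + 1) - w t))\<^sup>2
                     + (1 - C1) * \<alpha>\<^sup>2 / \<eta> * (norm (w (t + 1) - w t))\<^sup>2"
    if t: "t \<ge> 1" and a: "0 \<le> \<alpha>" "\<alpha> \<le> 1" and p: "\<forall>i<N. s0 \<le> inner (w t) (x i)"
      and q: "\<forall>i<N. s0 \<le> inner (w t + \<alpha> *\<^sub>R (w (t + 1) - w t)) (x i)" for t \<alpha>
  proof -
    define d where "d = w (t + 1) - w t"
    define e where "e = w t - w (t - 1)"
    define G where "G = gradient L (w t)"
    have de: "d = \<beta> *\<^sub>R e - (\<eta> * (1 - \<beta>)) *\<^sub>R G" using rel[OF t] by (simp add: d_def e_def G_def)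
    have desc: "L (w t + \<alpha> *\<^sub>R d) \<le> L (w t) + \<alpha> * inner G d + C1 / \<eta> * \<alpha>\<^sup>2 * (norm d)\<^sup>2"
    proof -
      have "L (w t + \<alpha> *\<^sub>R d) \<le> L (w t) + inner G (w t + \<alpha> *\<^sub>R d - w t)
           + \<sigma>\<^sup>2 * H / (2 * real N) * (norm (w t + \<alpha> *\<^sub>R d - w t))\<^sup>2"
        using loss_descent[OF A2_diff Hlip H0 N_pos p, of "w t + \<alpha> *\<^sub>R d"] q
        by (simp add: L_def G_def \<sigma>_def d_def)
      also have "\<dots> = L (w t) + \<alpha> * inner G d + C1 / \<eta> * \<alpha>\<^sup>2 * (norm d)\<^sup>2"
        using eta_pos by (simp add: C1_def power_mult_distrib)
      finally show ?thesis .
    qed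
    have kP: "(\<eta> * (1 - \<beta>)) * inner G d = \<beta> * inner e d - (norm d)\<^sup>2"
    proof -
      have "(\<eta> * (1 - \<beta>)) *\<^sub>R G = \<beta> *\<^sub>R e - d" using de by simp
      then have "inner ((\<eta> * (1 - \<beta>)) *\<^sub>R G) d = inner (\<beta> *\<^sub>R e - d) d" by simp
      then show ?thesis by (simp add: inner_diff_left power2_norm_eq_inner)
    qed
    have sq: "\<beta> * ((norm e)\<^sup>2 - 2 * \<alpha> * inner e d + \<alpha>\<^sup>2 * (norm d)\<^sup>2) \<ge> 0"
    proof -
      have "(norm e)\<^sup>2 - 2 * \<alpha> * inner e d + \<alpha>\<^sup>2 * (norm d)\<^sup>2 = (norm (e - \<alpha> *\<^sub>R d))\<^sup>2"
        unfolding power2_norm_eq_inner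
        by (simp add: inner_diff_left inner_diff_right inner_commute[of d e] power2_eq_square algebra_simps)
      then show ?thesis using beta by simp
    qed
    have "L (w t) + \<beta> / (2 * \<eta> * (1 - \<beta>)) * (norm e)\<^sup>2 \<ge> L (w t + \<alpha> *\<^sub>R d)
        + \<beta> * \<alpha>\<^sup>2 / (2 * \<eta> * (1 - \<beta>)) * (norm d)\<^sup>2 + (1 - C1) * \<alpha>\<^sup>2 / \<eta> * (norm d)\<^sup>2"
      by (rule arith_core[OF refl eta_pos beta a kP sq _ desc]) simp
    then show ?thesis by (simp add: \<xi>_def L_def d_def e_def)
  qed
  have boot: "\<forall>\<alpha>\<in>{0..1}. \<forall>i<N. s0 \<le> inner (w t + \<alpha> *\<^sub>R (w (t + 1) - w t)) (x i)"
    if t: "t \<ge> 1" and wS: "\<forall>i<N. s0 \<le> inner (w t) (x i)" and xi: "\<xi> t \<le> L (w 1)" for t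
  proof -
    define d where "d = w (t + 1) - w t"
    define e where "e = w t - w (t - 1)"
    define G where "G = gradient L (w t)"
    define a where "a i = inner (w t) (x i)" for i
    define b where "b i = inner d (x i)" for i
    have de: "d = \<beta> *\<^sub>R e - (\<eta> * (1 - \<beta>)) *\<^sub>R G" using rel[OF t] by (simp add: d_def e_def G_def)
    have lin: "inner (w t + \<alpha> *\<^sub>R d) (x i) = a i + \<alpha> * b i" for \<alpha> i
      by (simp add: inner_add_left a_def b_def)
    define A where "A = {\<alpha>. 0 \<le> \<alpha> \<and> \<alpha> \<le> 1 \<and> (\<forall>i<N. s0 \<le> a i + \<alpha> * b i)}"
    have A_eq: "A = {0..1} \<inter> (\<Inter>i\<in>{..<N}. {\<alpha>. s0 \<le> a i + \<alpha> * b i})"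
      unfolding A_def by auto
    have clA: "closed A" unfolding A_eq
      by (intro closed_Int closed_INT ballI closed_atLeastAtMost closed_Collect_le continuous_intros)
    have A0: "0 \<in> A" using wS by (simp add: A_def a_def)
    have bddA: "bdd_above A" unfolding A_def by (rule bdd_aboveI[of _ 1]) auto
    define \<alpha>0 where "\<alpha>0 = Sup A"
    have a0A: "\<alpha>0 \<in> A" unfolding \<alpha>0_def using closed_contains_Sup[OF _ bddA clA] A0 by blast
    then have a0: "0 \<le> \<alpha>0" "\<alpha>0 \<le> 1" "\<forall>i<N. s0 \<le> a i + \<alpha>0 * b i" by (auto simp: A_def)
    have "\<alpha>0 = 1"
    proof (rule ccontr)
      assume "\<alpha>0 \<noteq> 1"
      then have lt1: "\<alpha>0 < 1" using a0 by simp
      have claim: "\<forall>i<N. s0 < a i + \<alpha>0 * b i \<or> 0 \<le> b i"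
      proof (rule ccontr)
        assume "\<not> (\<forall>i<N. s0 < a i + \<alpha>0 * b i \<or> 0 \<le> b i)"
        then obtain i where i: "i < N" "a i + \<alpha>0 * b i \<le> s0" "b i < 0" by force
        have ai: "a i + \<alpha>0 * b i = s0" using i a0 by force
        have qS: "\<forall>j<N. s0 \<le> inner (w t + \<alpha>0 *\<^sub>R (w (t + 1) - w t)) (x j)"
          using a0 lin unfolding d_def by simp
        note I0 = Ib[OF t a0(1) a0(2) wS qS]
        define p where "p = w t + \<alpha>0 *\<^sub>R d"
        have "l s0 \<le> (\<Sum>j<N. l (inner p (x j)))"
        proof -
          have "l (inner p (x i)) \<le> (\<Sum>j<N. l (inner p (x j)))"
            by (rule member_le_sum) (use i lpos less_imp_le in auto)
          then show ?thesis using ai lin by (simp add: p_def)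
        qed
        then have "real N * L (w 1) \<le> real N * L p" using ls0 NL by simp
        then have Lp: "L (w 1) \<le> L p" using N_pos by simp
        have c1: "\<beta> * \<alpha>0\<^sup>2 / (2 * \<eta> * (1 - \<beta>)) * (norm d)\<^sup>2 \<ge> 0" using beta eta_pos by simp
        have dne: "d \<noteq> 0" using i(3) by (auto simp: b_def)
        have "\<alpha>0 = 0"
        proof (rule ccontr)
          assume "\<alpha>0 \<noteq> 0"
          then have "(1 - C1) * \<alpha>0\<^sup>2 / \<eta> * (norm d)\<^sup>2 > 0" using C1lt eta_pos dne by simp
          then show False using I0 c1 Lp xi by (simp add: p_def d_def)
        qed
        then have pw: "p = w t" by (simp add: p_def)
        have ait: "a i = s0" using ai \<open>\<alpha>0 = 0\<close> by simp
        have xiw: "\<xi> t = L (w t) + \<beta> / (2 * \<eta> * (1 - \<beta>)) * (norm e)\<^sup>2" by (simp add: \<xi>_def L_def e_def)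
        have "\<beta> / (2 * \<eta> * (1 - \<beta>)) * (norm e)\<^sup>2 \<le> 0" using xiw xi Lp pw by simp
        moreover have "\<beta> / (2 * \<eta> * (1 - \<beta>)) * (norm e)\<^sup>2 \<ge> 0" using beta eta_pos by simp
        ultimately have "\<beta> / (2 * \<eta> * (1 - \<beta>)) * (norm e)\<^sup>2 = 0"
          by linarith
        then have be: "\<beta> *\<^sub>R e = 0" using beta eta_pos by auto
        have only: "{..<N} = {i}"
        proof (rule ccontr)
          assume "{..<N} \<noteq> {i}"
          then obtain j where j: "j < N" "j \<noteq> i" using i by auto
          have "(\<Sum>k\<in>{i,j}. l (a k)) \<le> (\<Sum>k<N. l (a k))"
            by (rule sum_mono2) (use i j lpos less_imp_le in auto)
          then have "l (a i) + l (a j) \<le> real N * L (w t)" using j NL by (simp add: a_def)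
          moreover have "real N * L (w t) \<le> real N * L (w 1)"
          proof -
            have "L (w t) \<le> L (w 1)"
              using xi xiw \<open>\<beta> / (2 * \<eta> * (1 - \<beta>)) * (norm e)\<^sup>2 = 0\<close> by linarith
            then show ?thesis by (rule mult_left_mono) simp
          qed
          ultimately show False using ls0 ait lpos[of "a j"] by simp
        qed
        have "G = (1 / real N) *\<^sub>R (deriv l (a i) *\<^sub>R x i)"
          unfolding G_def L_def grad_formula[OF A2_diff] only by (simp add: a_def)
        then have "b i = - (\<eta> * (1 - \<beta>)) * (1 / real N) * deriv l (a i) * inner (x i) (x i)"
          unfolding b_def de using be by (auto simp: inner_diff_left)
        moreover have "(\<eta> * (1 - \<beta>)) * (1 / real N) * (- deriv l (a i)) * inner (x i) (x i) \<ge> 0"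
          using eta_pos beta N_pos A2_neg by (intro mult_nonneg_nonneg) (auto simp: less_imp_le)
        ultimately have "b i \<ge> 0" by simp
        then show False using i by simp
      qed
      have ev1: "eventually (\<lambda>\<alpha>. \<alpha>0 < \<alpha> \<and> \<alpha> < 1) (at_right \<alpha>0)"
      proof -
        have "((\<lambda>\<alpha>. \<alpha>) \<longlongrightarrow> \<alpha>0) (at_right \<alpha>0)" by (rule tendsto_ident_at)
        from order_tendstoD(2)[OF this lt1] have e1: "eventually (\<lambda>\<alpha>. \<alpha> < 1) (at_right \<alpha>0)" .
        have e2: "eventually (\<lambda>\<alpha>. \<alpha>0 < \<alpha>) (at_right \<alpha>0)" by (rule eventually_at_right_less)
        show ?thesis using eventually_conj[OF e2 e1] by simp
      qed
      have ev2: "\<forall>i\<in>{..<N}. eventually (\<lambda>\<alpha>. s0 \<le> a i + \<alpha> * b i) (at_right \<alpha>0)"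
      proof
        fix i assume "i \<in> {..<N}"
        then have i: "i < N" by simp
        show "eventually (\<lambda>\<alpha>. s0 \<le> a i + \<alpha> * b i) (at_right \<alpha>0)"
        proof (cases "0 \<le> b i")
          case True
          have *: "s0 \<le> a i + \<alpha> * b i" if "\<alpha>0 < \<alpha>" for \<alpha>
          proof -
            have "\<alpha>0 * b i \<le> \<alpha> * b i" using that True by (simp add: mult_right_mono)
            then show ?thesis using a0(3) i by force
          qed
          show ?thesis by (rule eventually_mono[OF eventually_at_right_less[of \<alpha>0]]) (rule *)
        next
          case False
          then have gt: "s0 < a i + \<alpha>0 * b i" using claim i by auto
          have "((\<lambda>\<alpha>. a i + \<alpha> * b i) \<longlongrightarrow> a i + \<alpha>0 * b i) (at_right \<alpha>0)"
            by (intro tendsto_intros)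
          from order_tendstoD(1)[OF this gt] show ?thesis by (auto elim: eventually_mono)
        qed
      qed
      have "eventually (\<lambda>\<alpha>. (\<alpha>0 < \<alpha> \<and> \<alpha> < 1) \<and> (\<forall>i\<in>{..<N}. s0 \<le> a i + \<alpha> * b i)) (at_right \<alpha>0)"
        using eventually_conj[OF ev1 eventually_ball_finite[OF _ ev2]] by simp
      then obtain \<alpha> where al: "\<alpha>0 < \<alpha>" "\<alpha> < 1" "\<forall>i\<in>{..<N}. s0 \<le> a i + \<alpha> * b i"
        using eventually_happens'[OF trivial_limit_at_right_real] by blast
      then have "\<alpha> \<in> A" using a0 by (auto simp: A_def)
      then have "\<alpha> \<le> \<alpha>0" unfolding \<alpha>0_def by (rule cSup_upper[OF _ bddA])
      then show False using al by simp
    qed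
    then have one: "\<forall>i<N. s0 \<le> a i + b i" using a0 by simp
    show ?thesis
    proof (intro ballI allI impI)
      fix \<alpha> :: real and i assume al: "\<alpha> \<in> {0..1}" and i: "i < N"
      have "s0 \<le> a i + \<alpha> * b i"
      proof (cases "0 \<le> b i")
        case True
        then have "0 \<le> \<alpha> * b i" using al by simp
        moreover have "s0 \<le> a i" using wS i by (simp add: a_def)
        ultimately show ?thesis by linarith
      next
        case False
        then have "(1 - \<alpha>) * b i \<le> 0" using al by (simp add: mult_nonneg_nonpos)
        moreover have "s0 \<le> a i + b i" using one i by simp
        ultimately show ?thesis by (simp add: algebra_simps)
      qed
      then show "s0 \<le> inner (w t + \<alpha> *\<^sub>R (w (t + 1) - w t)) (x i)" using lin d_def by simp
    qed
  qed
  have dec: "\<xi> t \<ge> \<xi> (t + 1) + (1 - C1) / \<eta> * (norm (w (t + 1) - w t))\<^sup>2"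
    and dec2: "L (w (t + 1)) \<le> \<xi> (t + 1)"
    if t: "t \<ge> 1" and wS: "\<forall>i<N. s0 \<le> inner (w t) (x i)" and xi: "\<xi> t \<le> L (w 1)" for t
  proof -
    have S1: "\<forall>i<N. s0 \<le> inner (w t + 1 *\<^sub>R (w (t + 1) - w t)) (x i)"
      using bspec[OF boot[OF t wS xi], of 1] by simp
    have I1: "\<xi> t \<ge> L (w (t + 1)) + \<beta> / (2 * \<eta> * (1 - \<beta>)) * (norm (w (t + 1) - w t))\<^sup>2
                     + (1 - C1) / \<eta> * (norm (w (t + 1) - w t))\<^sup>2"
      using Ib[OF t _ _ wS S1] by simp
    have xi': "\<xi> (t + 1) = L (w (t + 1)) + \<beta> / (2 * \<eta> * (1 - \<beta>)) * (norm (w (t + 1) - w t))\<^sup>2"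
      by (simp add: \<xi>_def L_def)
    show "\<xi> t \<ge> \<xi> (t + 1) + (1 - C1) / \<eta> * (norm (w (t + 1) - w t))\<^sup>2" using I1 xi' by simp
    have "\<beta> / (2 * \<eta> * (1 - \<beta>)) * (norm (w (t + 1) - w t))\<^sup>2 \<ge> 0" using beta eta_pos by simp
    then show "L (w (t + 1)) \<le> \<xi> (t + 1)" using xi' by simp
  qed
  have ind: "(\<forall>i<N. s0 \<le> inner (w t) (x i)) \<and> \<xi> t \<le> L (w 1)" if "t \<ge> 1" for t
    using that
  proof (induction t rule: nat_induct_at_least)
    case base
    have "\<xi> 1 = L (w 1)" using w0 by (simp add: \<xi>_def L_def)
    then show ?case using inS by simp
  next
    case (Suc t)
    have "(1 - C1) / \<eta> * (norm (w (t + 1) - w t))\<^sup>2 \<ge> 0" using C1lt eta_pos by simp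
    then have "\<xi> (t + 1) \<le> L (w 1)" using dec[OF Suc.hyps] Suc.IH by auto
    moreover have "\<forall>i<N. s0 \<le> inner (w (t + 1)) (x i)"
      using inS dec2[OF Suc.hyps] Suc.IH \<open>\<xi> (t + 1) \<le> L (w 1)\<close> by force
    ultimately show ?case by simp
  qed
  have F1: "\<forall>t\<ge>1. \<forall>\<alpha>\<in>{0..1}. \<xi> t \<ge> L (w t + \<alpha> *\<^sub>R (w (t + 1) - w t))
                     + \<beta> * \<alpha>\<^sup>2 / (2 * \<eta> * (1 - \<beta>)) * (norm (w (t + 1) - w t))\<^sup>2
                     + (1 - C1) * \<alpha>\<^sup>2 / \<eta> * (norm (w (t + 1) - w t))\<^sup>2"
  proof (intro allI impI ballI)
    fix t :: nat and \<alpha> :: real assume t: "t \<ge> 1" and a: "\<alpha> \<in> {0..1}"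
    show "\<xi> t \<ge> L (w t + \<alpha> *\<^sub>R (w (t + 1) - w t))
                     + \<beta> * \<alpha>\<^sup>2 / (2 * \<eta> * (1 - \<beta>)) * (norm (w (t + 1) - w t))\<^sup>2
                     + (1 - C1) * \<alpha>\<^sup>2 / \<eta> * (norm (w (t + 1) - w t))\<^sup>2"
      using Ib[OF t _ _ conjunct1[OF ind[OF t]]] boot[OF t conjunct1[OF ind[OF t]] conjunct2[OF ind[OF t]]] a
      by auto
  qed
  have F2: "\<forall>t\<ge>1. \<xi> t \<ge> \<xi> (t + 1) + (1 - C1) / \<eta> * (norm (w (t + 1) - w t))\<^sup>2"
    using dec ind by blast
  show ?thesis unfolding Let_def using conjI[OF F1 F2] unfolding \<xi>_def L_def C1_def H_def \<sigma>_def s0_def .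
qed

end
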